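(* Let $k\ge 1$ and let $H$ be a connected $k$-regular $k$-edge-colorable graph with no loops or semi-edges (multiple ordinary edges allowed). Then there exists a connected simple $k$-regular $k$-edge-colorable graph $G$ and a vertex $u\in V(G)$ such that for every vertex $x\in V(H)$ and every bijection $\sigma:E_G(u)\to E_H(x)$ there exists a covering projection from $G$ to $H$ that maps $u$ to $x$ and agrees with $\sigma$ on $E_G(u)$.
   Context: $E_G(u)$ denotes the set of edges of $G$ incident with $u$. A graph is simple if it has no loops, no semi-edges and no multiple edges. A covering projection between graphs without loops and semi-edges is a map sending vertices to vertices and edges to edges, preserving incidences, such that for every edge $xy$ of the target its preimage is a perfect matching between the preimages of $x$ and $y$ (equivalently, it restricts to a bijection from $E_G(v)$ onto $E_H(f(v))$ for every vertex $v$). *)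

theory Defs
  imports Main
begin

text \<open>Loops and semi-edges
are excluded by requiring every edge to have exactly two distinct ends;
parallel edges are allowed.\<close>

definition loopless_multigraph :: "'v set \<Rightarrow> 'e set \<Rightarrow> ('e \<Rightarrow> 'v set) \<Rightarrow> bool" where
  "loopless_multigraph V E ends \<longleftrightarrow> finite V \<and> finite E \<and>
     (\<forall>e\<in>E. ends e \<subseteq> V \<and> card (ends e) = 2)"

definition simple_graph :: "'v set \<Rightarrow> 'e set \<Rightarrow> ('e \<Rightarrow> 'v set) \<Rightarrow> bool" where
  "simple_graph V E ends \<longleftrightarrow> loopless_multigraph V E ends \<and> inj_on ends E"

definition incident_edges :: "'e set \<Rightarrow> ('e \<Rightarrow> 'v set) \<Rightarrow> 'v \<Rightarrow> 'e set" where
  "incident_edges E ends u = {e \<in> E. u \<in> ends e}"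

definition regular :: "nat \<Rightarrow> 'v set \<Rightarrow> 'e set \<Rightarrow> ('e \<Rightarrow> 'v set) \<Rightarrow> bool" where
  "regular k V E ends \<longleftrightarrow> (\<forall>v\<in>V. card (incident_edges E ends v) = k)"

definition edge_colorable :: "nat \<Rightarrow> 'v set \<Rightarrow> 'e set \<Rightarrow> ('e \<Rightarrow> 'v set) \<Rightarrow> bool" where
  "edge_colorable k V E ends \<longleftrightarrow> (\<exists>c::'e \<Rightarrow> nat. (\<forall>e\<in>E. c e < k) \<and>
     (\<forall>v\<in>V. inj_on c (incident_edges E ends v)))"

definition adj_rel :: "'e set \<Rightarrow> ('e \<Rightarrow> 'v set) \<Rightarrow> ('v \<times> 'v) set" where
  "adj_rel E ends = {(x, y). \<exists>e\<in>E. ends e = {x, y}}"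

definition connected_graph :: "'v set \<Rightarrow> 'e set \<Rightarrow> ('e \<Rightarrow> 'v set) \<Rightarrow> bool" where
  "connected_graph V E ends \<longleftrightarrow> V \<noteq> {} \<and> (\<forall>x\<in>V. \<forall>y\<in>V. (x, y) \<in> (adj_rel E ends)\<^sup>*)"

definition covering_projection ::
  "'v set \<Rightarrow> 'e set \<Rightarrow> ('e \<Rightarrow> 'v set) \<Rightarrow> 'w set \<Rightarrow> 'f set \<Rightarrow> ('f \<Rightarrow> 'w set)
   \<Rightarrow> ('v \<Rightarrow> 'w) \<Rightarrow> ('e \<Rightarrow> 'f) \<Rightarrow> bool" where
  "covering_projection VG EG endsG VH EH endsH fV fE \<longleftrightarrow>
     (\<forall>v\<in>VG. fV v \<in> VH) \<and> (\<forall>e\<in>EG. fE e \<in> EH) \<and>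
     (\<forall>e\<in>EG. endsH (fE e) = fV ` endsG e) \<and>
     (\<forall>v\<in>VG. bij_betw fE (incident_edges EG endsG v) (incident_edges EH endsH (fV v)))"

end

theory Submission imports Defs "HOL-Combinatorics.Permutations" "HOL-Library.FuncSet" begin

locale Hg =
  fixes k :: nat and VH :: "'v set" and EH :: "'e set" and endsH :: "'e \<Rightarrow> 'v set"
    and c :: "'e \<Rightarrow> nat"
  assumes ll: "loopless_multigraph VH EH endsH"
    and reg: "regular k VH EH endsH"
    and cbound: "\<forall>e\<in>EH. c e < k"
    and cinj: "\<forall>v\<in>VH. inj_on c (incident_edges EH endsH v)"
begin

abbreviation "inc v \<equiv> incident_edges EH endsH v"

lemma inc_sub: "inc v \<subseteq> EH" by (auto simp: incident_edges_def)

lemma fin_inc: "finite (inc v)"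
proof -
  have "finite EH" using ll by (simp add: loopless_multigraph_def)
  then show ?thesis by (rule finite_subset[OF inc_sub])
qed

lemma cimg: assumes "v \<in> VH" shows "c ` inc v = {0..<k}"
proof -
  have "c ` inc v \<subseteq> {0..<k}" using cbound by (auto simp: incident_edges_def)
  moreover have "card (c ` inc v) = k"
  proof -
    have "inj_on c (inc v)" using cinj assms by blast
    then have "card (c ` inc v) = card (inc v)" by (rule card_image)
    also have "\<dots> = k" using reg assms unfolding regular_def by blast
    finally show ?thesis .
  qed
  ultimately show ?thesis by (simp add: card_subset_eq)
qed

definition eH :: "'v \<Rightarrow> nat \<Rightarrow> 'e" where
  "eH v j = (THE e. e \<in> inc v \<and> c e = j)"

lemma eH_ex1: assumes "v \<in> VH" "j < k" shows "\<exists>!e. e \<in> inc v \<and> c e = j"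
proof -
  have "j \<in> c ` inc v" using cimg[OF assms(1)] assms(2) by simp
  then obtain e where "e \<in> inc v" "c e = j" by blast
  moreover have "\<And>e'. e' \<in> inc v \<Longrightarrow> c e' = j \<Longrightarrow> e' = e"
    using cinj assms(1) calculation unfolding inj_on_def by metis
  ultimately show ?thesis by blast
qed

lemma eH: assumes "v \<in> VH" "j < k" shows "eH v j \<in> inc v" "c (eH v j) = j"
  using theI'[OF eH_ex1[OF assms]] unfolding eH_def by auto

lemma eH_uniq: assumes "v \<in> VH" "e \<in> inc v" shows "eH v (c e) = e"
proof -
  have "c e < k" using cbound assms by (auto simp: incident_edges_def)
  then show ?thesis using eH_ex1[OF assms(1)] eH[OF assms(1)] assms(2) by blast
qed

definition pi :: "nat \<Rightarrow> 'v \<Rightarrow> 'v" where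
  "pi j v = (SOME w. endsH (eH v j) = {v, w} \<and> w \<noteq> v)"

lemma pi: assumes "v \<in> VH" "j < k"
  shows "endsH (eH v j) = {v, pi j v}" "pi j v \<noteq> v" "pi j v \<in> VH"
proof -
  have e: "eH v j \<in> EH" "v \<in> endsH (eH v j)" using eH[OF assms] by (auto simp: incident_edges_def)
  then have c2: "card (endsH (eH v j)) = 2" and sub: "endsH (eH v j) \<subseteq> VH"
    using ll unfolding loopless_multigraph_def by auto
  then obtain a b where ab: "endsH (eH v j) = {a,b}" "a \<noteq> b" by (auto simp: card_2_iff)
  have "\<exists>w. endsH (eH v j) = {v, w} \<and> w \<noteq> v"
    using ab e(2) by (metis doubleton_eq_iff insert_iff singleton_iff)
  then have "endsH (eH v j) = {v, pi j v} \<and> pi j v \<noteq> v"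
    unfolding pi_def by (rule someI_ex)
  then show "endsH (eH v j) = {v, pi j v}" "pi j v \<noteq> v" "pi j v \<in> VH" using sub by auto
qed

lemma eH_pi: assumes "v \<in> VH" "j < k" shows "eH (pi j v) j = eH v j"
proof -
  have "eH v j \<in> inc (pi j v)" using eH[OF assms] pi[OF assms] by (auto simp: incident_edges_def)
  then have "eH (pi j v) (c (eH v j)) = eH v j" by (rule eH_uniq[OF pi(3)[OF assms]])
  then show ?thesis using eH(2)[OF assms] by simp
qed

lemma pi_pi: assumes "v \<in> VH" "j < k" shows "pi j (pi j v) = v"
proof -
  have w: "pi j v \<in> VH" using pi[OF assms] by auto
  have "{pi j v, pi j (pi j v)} = endsH (eH (pi j v) j)" using pi(1)[OF w assms(2)] by simp
  also have "\<dots> = endsH (eH v j)" by (simp only: eH_pi[OF assms])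
  also have "\<dots> = {v, pi j v}" by (rule pi(1)[OF assms])
  finally have "{pi j v, pi j (pi j v)} = {v, pi j v}" .
  then show ?thesis using pi(2)[OF w assms(2)] by (simp add: doubleton_eq_iff)
qed

declare split_paired_Ex[simp del] split_paired_All[simp del]

definition "Perms = {\<rho>::nat\<Rightarrow>nat. \<rho> permutes {0..<k}}"
definition "D = Perms \<times> VH"
definition flip :: "nat \<Rightarrow> nat set \<Rightarrow> nat set" where
  "flip i b = (if i \<in> b then b - {i} else insert i b)"
definition T :: "nat \<Rightarrow> nat set \<times> ((nat\<Rightarrow>nat)\<times>'v \<Rightarrow> 'v) \<Rightarrow> nat set \<times> ((nat\<Rightarrow>nat)\<times>'v \<Rightarrow> 'v)" where
  "T i x = (flip i (fst x), restrict (\<lambda>p. pi (fst p i) (snd x p)) D)"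
definition "B = Pow {0..<k} \<times> PiE D (\<lambda>_. VH)"
definition "u0 = ({}, restrict snd D)"
definition "Step = {(x, T i x) | x i. i < k}"
definition "R = Step\<^sup>* `` {u0}"
definition "EG = {(i, {x, T i x}) | x i. x \<in> R \<and> i < k}"

lemma flip_flip: "flip i (flip i b) = b" by (auto simp: flip_def)
lemma flip_neq: "flip i b \<noteq> b" by (auto simp: flip_def)
lemma flip_neq2: "i \<noteq> j \<Longrightarrow> flip i b \<noteq> flip j b" by (auto simp: flip_def)

lemma Perms_lt: "\<rho> \<in> Perms \<Longrightarrow> i < k \<Longrightarrow> \<rho> i < k"
  unfolding Perms_def using permutes_in_image by fastforce

lemma T_B: assumes "x \<in> B" "i < k" shows "T i x \<in> B"
proof -
  have "flip i (fst x) \<subseteq> {0..<k}" using assms by (auto simp: B_def flip_def)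
  moreover have "restrict (\<lambda>p. pi (fst p i) (snd x p)) D \<in> PiE D (\<lambda>_. VH)"
  proof
    fix p assume p: "p \<in> D"
    then have "snd x p \<in> VH" "fst p i < k" using assms Perms_lt by (auto simp: B_def D_def)
    then show "restrict (\<lambda>p. pi (fst p i) (snd x p)) D p \<in> VH" using p pi(3) by auto
  qed auto
  ultimately show ?thesis by (simp add: T_def B_def)
qed

lemma TT: assumes "x \<in> B" "i < k" shows "T i (T i x) = x"
proof -
  have "snd (T i (T i x)) = snd x"
  proof
    fix p show "snd (T i (T i x)) p = snd x p"
    proof (cases "p \<in> D")
      case True
      then have "snd x p \<in> VH" "fst p i < k" using assms Perms_lt by (auto simp: B_def D_def)
      then show ?thesis using True pi_pi by (simp add: T_def)
    next
      case False
      then show ?thesis using assms by (auto simp: T_def B_def PiE_def extensional_def)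
    qed
  qed
  moreover have "fst (T i (T i x)) = fst x" by (simp add: T_def flip_flip)
  ultimately show ?thesis by (simp add: prod_eq_iff)
qed

lemma T_neq: "T i x \<noteq> x" using flip_neq by (metis T_def fst_conv)
lemma T_neq2: "i \<noteq> j \<Longrightarrow> T i x \<noteq> T j x" using flip_neq2 by (metis T_def fst_conv)

lemma u0_B: "u0 \<in> B" by (auto simp: u0_def B_def D_def)

lemma R_B: "R \<subseteq> B"
proof
  fix x assume "x \<in> R"
  then have "(u0, x) \<in> Step\<^sup>*" by (simp add: R_def)
  then show "x \<in> B"
    by (induction rule: rtrancl_induct) (auto simp: u0_B Step_def T_B)
qed

lemma u0_R: "u0 \<in> R" by (simp add: R_def)

lemma R_T: "x \<in> R \<Longrightarrow> i < k \<Longrightarrow> T i x \<in> R"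
  unfolding R_def Step_def by (auto intro: rtrancl_into_rtrancl)

lemma fin_B: "finite B"
proof -
  have "finite VH" using ll by (simp add: loopless_multigraph_def)
  moreover have "finite Perms" unfolding Perms_def by (rule finite_permutations) simp
  ultimately have "finite D" by (simp add: D_def)
  then show ?thesis using \<open>finite VH\<close> by (simp add: B_def finite_PiE)
qed

lemma fin_R: "finite R" using fin_B R_B finite_subset by blast

lemma incG: assumes "x \<in> R" shows "incident_edges EG snd x = (\<lambda>i. (i, {x, T i x})) ` {0..<k}"
proof
  show "incident_edges EG snd x \<subseteq> (\<lambda>i. (i, {x, T i x})) ` {0..<k}"
  proof
    fix e assume "e \<in> incident_edges EG snd x"
    then obtain y i where e: "e = (i, {y, T i y})" "y \<in> R" "i < k" "x \<in> {y, T i y}"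
      by (auto simp: incident_edges_def EG_def)
    have "{y, T i y} = {x, T i x}"
    proof (cases "x = y")
      case False
      then have "x = T i y" using e by auto
      then have "T i x = y" using TT R_B e by blast
      then show ?thesis using \<open>x = T i y\<close> by auto
    qed simp
    then show "e \<in> (\<lambda>i. (i, {x, T i x})) ` {0..<k}" using e by auto
  qed
  show "(\<lambda>i. (i, {x, T i x})) ` {0..<k} \<subseteq> incident_edges EG snd x"
    using assms by (auto simp: incident_edges_def EG_def)
qed

lemma incG_inj: "inj_on (\<lambda>i. (i, {x, T i x})) A" by (auto simp: inj_on_def)

lemma G_simple: "simple_graph R EG snd"
  unfolding simple_graph_def loopless_multigraph_def
proof (intro conjI)
  show "finite R" by (rule fin_R)
  have "EG = (\<lambda>(x,i). (i, {x, T i x})) ` (R \<times> {0..<k})" by (auto simp: EG_def)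
  then show "finite EG" using fin_R by simp
  show "\<forall>e\<in>EG. snd e \<subseteq> R \<and> card (snd e) = 2"
  proof
    fix e assume "e \<in> EG"
    then obtain x i where "e = (i, {x, T i x})" "x \<in> R" "i < k" unfolding EG_def by blast
    then show "snd e \<subseteq> R \<and> card (snd e) = 2" using R_T T_neq[of i x] by simp
  qed
  show "inj_on snd EG"
  proof (rule inj_onI)
    fix e1 e2 assume "e1 \<in> EG" "e2 \<in> EG" "snd e1 = snd e2"
    then obtain x i y j where e: "e1 = (i, {x, T i x})" "e2 = (j, {y, T j y})" "x \<in> R" "y \<in> R"
      "i < k" "j < k" "{x, T i x} = {y, T j y}" by (auto simp: EG_def)
    have "i = j"
    proof (cases "x = y")
      case True then show ?thesis using e T_neq T_neq2 by (metis doubleton_eq_iff)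
    next
      case False
      then have "x = T j y" "T i x = y" using e by (auto simp: doubleton_eq_iff)
      then have "T j x = y" using TT R_B e by blast
      then show ?thesis using \<open>T i x = y\<close> T_neq2 by metis
    qed
    then show "e1 = e2" using e by simp
  qed
qed

lemma G_regular: "regular k R EG snd"
  unfolding regular_def using incG incG_inj by (simp add: card_image)

lemma G_col: "edge_colorable k R EG snd"
  unfolding edge_colorable_def
proof (rule exI[of _ fst], intro conjI ballI)
  fix e assume "e \<in> EG"
  then obtain x i where "e = (i, {x, T i x})" "x \<in> R" "i < k" unfolding EG_def by blast
  then show "fst e < k" by simp
next
  fix v assume v: "v \<in> R"
  show "inj_on fst (incident_edges EG snd v)" unfolding incG[OF v] by (rule inj_onI) auto
qed

lemma adj: "x \<in> R \<Longrightarrow> i < k \<Longrightarrow> (x, T i x) \<in> adj_rel EG snd \<and> (T i x, x) \<in> adj_rel EG snd"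
proof -
  assume a: "x \<in> R" "i < k"
  have e: "(i,{x,T i x}) \<in> EG" unfolding EG_def using a by blast
  have "snd (i,{x,T i x}) = {x, T i x}" "snd (i,{x,T i x}) = {T i x, x}" by (auto simp: insert_commute)
  then show ?thesis unfolding adj_rel_def using e by blast
qed

lemma G_conn: "connected_graph R EG snd"
proof -
  have fw: "(u0, x) \<in> (adj_rel EG snd)\<^sup>* \<and> (x, u0) \<in> (adj_rel EG snd)\<^sup>*" if "x \<in> R" for x
  proof -
    have "(u0, x) \<in> Step\<^sup>*" using that by (simp add: R_def)
    then show ?thesis
    proof (induction rule: rtrancl_induct)
      case (step y z)
      then obtain i where i: "z = T i y" "i < k" by (auto simp: Step_def)
      have "y \<in> R" using step(1) by (simp add: R_def)
      have a: "(y, z) \<in> adj_rel EG snd" "(z, y) \<in> adj_rel EG snd"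
        using adj[OF \<open>y \<in> R\<close> i(2)] i(1) by auto
      show ?case
      proof
        show "(u0, z) \<in> (adj_rel EG snd)\<^sup>*" using step(3) a(1) by (blast intro: rtrancl_into_rtrancl)
        show "(z, u0) \<in> (adj_rel EG snd)\<^sup>*" using step(3) a(2) by (blast intro: converse_rtrancl_into_rtrancl)
      qed
    qed simp
  qed
  show ?thesis unfolding connected_graph_def
  proof (intro conjI ballI)
    show "R \<noteq> {}" using u0_R by blast
    fix x y assume "x \<in> R" "y \<in> R"
    then have "(x, u0) \<in> (adj_rel EG snd)\<^sup>*" "(u0, y) \<in> (adj_rel EG snd)\<^sup>*" using fw by blast+
    then show "(x, y) \<in> (adj_rel EG snd)\<^sup>*" by (rule rtrancl_trans)
  qed
qed

lemma eH_bij: assumes "v \<in> VH" shows "bij_betw (eH v) {0..<k} (inc v)"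
proof (rule bij_betw_imageI)
  show "inj_on (eH v) {0..<k}"
  proof (rule inj_onI)
    fix i j assume ij: "i \<in> {0..<k}" "j \<in> {0..<k}" and eq: "eH v i = eH v j"
    from ij have ci: "c (eH v i) = i" and cj: "c (eH v j) = j" using eH(2)[OF assms] by auto
    have "i = c (eH v i)" by (rule ci[symmetric])
    also have "\<dots> = c (eH v j)" by (simp only: eq)
    also have "\<dots> = j" by (rule cj)
    finally show "i = j" .
  qed
  show "eH v ` {0..<k} = inc v"
  proof
    show "eH v ` {0..<k} \<subseteq> inc v" using eH(1)[OF assms] by auto
    show "inc v \<subseteq> eH v ` {0..<k}"
    proof
      fix e assume e: "e \<in> inc v"
      then have "c e < k" using cbound by (auto simp: incident_edges_def)
      then have "eH v (c e) \<in> eH v ` {0..<k}" by simp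
      then show "e \<in> eH v ` {0..<k}" using eH_uniq[OF assms e] by simp
    qed
  qed
qed

type_synonym ('w) gv = "nat set \<times> ((nat\<Rightarrow>nat)\<times>'w \<Rightarrow> 'w)"
definition fV :: "(nat\<Rightarrow>nat) \<Rightarrow> 'v \<Rightarrow> 'v gv \<Rightarrow> 'v" where "fV \<rho> x v = snd v (\<rho>, x)"
definition fE :: "(nat\<Rightarrow>nat) \<Rightarrow> 'v \<Rightarrow> nat \<times> 'v gv set \<Rightarrow> 'e" where "fE \<rho> x e = eH (fV \<rho> x (SOME y. y \<in> snd e)) (\<rho> (fst e))"

context
  fixes \<rho> x assumes \<rho>: "\<rho> \<in> Perms" and x: "x \<in> VH"
begin
abbreviation "fV0 \<equiv> fV \<rho> x"
abbreviation "fE0 \<equiv> fE \<rho> x"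

lemma px: "(\<rho>, x) \<in> D" using \<rho> x by (simp add: D_def)

lemma fV_VH: "y \<in> R \<Longrightarrow> fV0 y \<in> VH"
  using R_B px unfolding fV_def B_def by (auto simp: PiE_def Pi_def)

lemma fV_T: "y \<in> R \<Longrightarrow> i < k \<Longrightarrow> fV0 (T i y) = pi (\<rho> i) (fV0 y)"
  using px by (simp add: fV_def T_def)

lemma fE_edge: assumes "y \<in> R" "i < k" shows "fE0 (i, {y, T i y}) = eH (fV0 y) (\<rho> i)"
proof -
  define z where "z = (SOME z. z \<in> {y, T i y})"
  have "z \<in> {y, T i y}" unfolding z_def by (rule someI[of _ y]) simp
  moreover have ri: "\<rho> i < k" using Perms_lt[OF \<rho> assms(2)] .
  moreover have "eH (fV0 (T i y)) (\<rho> i) = eH (fV0 y) (\<rho> i)"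
    using fV_T[OF assms] eH_pi[OF fV_VH[OF assms(1)] ri] by simp
  ultimately have "eH (fV0 z) (\<rho> i) = eH (fV0 y) (\<rho> i)" by auto
  then show ?thesis by (simp add: fE_def z_def)
qed

lemma cover: "covering_projection R EG snd VH EH endsH fV0 fE0"
  unfolding covering_projection_def
proof (intro conjI ballI)
  fix v assume "v \<in> R" then show "fV0 v \<in> VH" by (rule fV_VH)
next
  fix e assume "e \<in> EG"
  then obtain y i where e: "e = (i, {y, T i y})" "y \<in> R" "i < k" unfolding EG_def by blast
  have ri: "\<rho> i < k" using Perms_lt[OF \<rho> e(3)] .
  have fe: "fE0 e = eH (fV0 y) (\<rho> i)" using fE_edge[OF e(2,3)] e(1) by simp
  show "fE0 e \<in> EH" using fe eH(1)[OF fV_VH[OF e(2)] ri] inc_sub[of "fV0 y"] by auto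
  show "endsH (fE0 e) = fV0 ` snd e"
    using fe pi(1)[OF fV_VH[OF e(2)] ri] fV_T[OF e(2,3)] e(1) by simp
next
  fix y assume y: "y \<in> R"
  define g where "g = (\<lambda>i. (i, {y, T i y}))"
  have gb: "bij_betw g {0..<k} (incident_edges EG snd y)"
    unfolding incG[OF y] g_def by (rule bij_betw_imageI[OF incG_inj]) simp
  have b1: "bij_betw (eH (fV0 y) \<circ> \<rho>) {0..<k} (inc (fV0 y))"
  proof (rule bij_betw_trans)
    have "\<rho> permutes {0..<k}" using \<rho> by (simp add: Perms_def)
    then show "bij_betw \<rho> {0..<k} {0..<k}" by (rule permutes_imp_bij)
    show "bij_betw (eH (fV0 y)) {0..<k} (inc (fV0 y))" by (rule eH_bij[OF fV_VH[OF y]])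
  qed
  have eq: "\<And>i. i \<in> {0..<k} \<Longrightarrow> (fE0 \<circ> g) i = (eH (fV0 y) \<circ> \<rho>) i"
    using fE_edge[OF y] by (simp add: g_def)
  then have "bij_betw (fE0 \<circ> g) {0..<k} (inc (fV0 y)) = bij_betw (eH (fV0 y) \<circ> \<rho>) {0..<k} (inc (fV0 y))"
    by (rule bij_betw_cong)
  with b1 have "bij_betw (fE0 \<circ> g) {0..<k} (inc (fV0 y))" by simp
  then show "bij_betw fE0 (incident_edges EG snd y) (inc (fV0 y))"
    by (simp only: bij_betw_comp_iff[OF gb])
qed

end

lemma main_loc:
  assumes x: "x \<in> VH" and \<sigma>: "bij_betw \<sigma> (incident_edges EG snd u0) (inc x)"
  shows "\<exists>FV FE. covering_projection R EG snd VH EH endsH FV FE \<and> FV u0 = x \<and>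
                 (\<forall>e\<in>incident_edges EG snd u0. FE e = \<sigma> e)"
proof -
  define g where "g = (\<lambda>i. (i, {u0, T i u0}))"
  have incu: "incident_edges EG snd u0 = g ` {0..<k}" unfolding g_def by (rule incG[OF u0_R])
  define \<rho> where "\<rho> i = (if i < k then c (\<sigma> (g i)) else i)" for i
  have sg: "i < k \<Longrightarrow> \<sigma> (g i) \<in> inc x" for i using \<sigma> incu unfolding bij_betw_def by auto
  have inj: "inj_on \<rho> {0..<k}"
  proof (rule inj_onI)
    fix i j assume ij: "i \<in> {0..<k}" "j \<in> {0..<k}" "\<rho> i = \<rho> j"
    then have "c (\<sigma> (g i)) = c (\<sigma> (g j))" by (simp add: \<rho>_def)
    then have "\<sigma> (g i) = \<sigma> (g j)" using cinj x sg ij(1,2) unfolding inj_on_def by simp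
    moreover have "inj_on \<sigma> (g ` {0..<k})" using \<sigma> incu unfolding bij_betw_def by simp
    ultimately have "g i = g j" using ij(1,2) unfolding inj_on_def by blast
    then show "i = j" by (simp add: g_def)
  qed
  have sub: "\<rho> ` {0..<k} \<subseteq> {0..<k}"
  proof
    fix j assume "j \<in> \<rho> ` {0..<k}"
    then obtain i where i: "i < k" "j = \<rho> i" by auto
    have "\<sigma> (g i) \<in> EH" using sg[OF i(1)] inc_sub[of x] by auto
    then show "j \<in> {0..<k}" using cbound i by (simp add: \<rho>_def)
  qed
  have "\<rho> ` {0..<k} = {0..<k}" by (rule endo_inj_surj[OF _ sub inj]) simp
  then have "bij_betw \<rho> {0..<k} {0..<k}" using inj by (simp add: bij_betw_def)
  then have "\<rho> permutes {0..<k}" by (rule bij_imp_permutes) (simp add: \<rho>_def)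
  then have \<rho>P: "\<rho> \<in> Perms" by (simp add: Perms_def)
  show ?thesis
  proof (intro exI conjI)
    show "covering_projection R EG snd VH EH endsH (fV \<rho> x) (fE \<rho> x)" by (rule cover[OF \<rho>P x])
    show "fV \<rho> x u0 = x" using px[OF \<rho>P x] by (simp add: fV_def u0_def)
    show "\<forall>e\<in>incident_edges EG snd u0. fE \<rho> x e = \<sigma> e"
    proof
      fix e assume "e \<in> incident_edges EG snd u0"
      then obtain i where i: "i < k" "e = g i" using incu by auto
      have a: "fE \<rho> x e = eH (fV \<rho> x u0) (\<rho> i)" unfolding i(2) g_def
        by (rule fE_edge[OF \<rho>P x u0_R i(1)])
      have b: "fV \<rho> x u0 = x" using px[OF \<rho>P x] by (simp add: fV_def u0_def)
      have "fE \<rho> x e = eH x (\<rho> i)" using a b by simp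
      also have "\<dots> = \<sigma> e" using eH_uniq[OF x sg[OF i(1)]] i by (simp add: \<rho>_def)
      finally show "fE \<rho> x e = \<sigma> e" .
    qed
  qed
qed

end

definition good :: "nat \<Rightarrow> 'v set \<Rightarrow> 'e set \<Rightarrow> ('e \<Rightarrow> 'v set) \<Rightarrow> 'a set \<Rightarrow> 'b set \<Rightarrow> ('b \<Rightarrow> 'a set) \<Rightarrow> 'a \<Rightarrow> bool" where
  "good k VH EH endsH VG EG endsG u \<longleftrightarrow>
     simple_graph VG EG endsG \<and> connected_graph VG EG endsG \<and>
     regular k VG EG endsG \<and> edge_colorable k VG EG endsG \<and> u \<in> VG \<and>
     (\<forall>x\<in>VH. \<forall>\<sigma>. bij_betw \<sigma> (incident_edges EG endsG u) (incident_edges EH endsH x) \<longrightarrow>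
        (\<exists>fV fE. covering_projection VG EG endsG VH EH endsH fV fE \<and> fV u = x \<and>
           (\<forall>e\<in>incident_edges EG endsG u. fE e = \<sigma> e)))"

lemma transfer:
  fixes V :: "'a set" and E :: "'b set" and ends :: "'b \<Rightarrow> 'a set"
    and \<alpha> :: "'a \<Rightarrow> 'c" and \<beta> :: "'b \<Rightarrow> 'd"
  assumes G: "good k VH EH endsH V E ends u" and a: "inj_on \<alpha> V" and b: "inj_on \<beta> E"
  shows "good k VH EH endsH (\<alpha> ` V) (\<beta> ` E) (\<lambda>e'. \<alpha> ` ends (inv_into E \<beta> e')) (\<alpha> u)"
proof -
  define ends' where "ends' = (\<lambda>e'. \<alpha> ` ends (inv_into E \<beta> e'))"
  have simple: "simple_graph V E ends" using G by (simp add: good_def)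
  then have ll: "loopless_multigraph V E ends" by (simp add: simple_graph_def)
  have S: "ends e \<subseteq> V" if "e \<in> E" for e using ll that by (simp add: loopless_multigraph_def)
  have E1: "ends' (\<beta> e) = \<alpha> ` ends e" if "e \<in> E" for e
    using b that by (simp add: ends'_def)
  have INC: "incident_edges (\<beta> ` E) ends' (\<alpha> v) = \<beta> ` incident_edges E ends v" if v: "v \<in> V" for v
  proof
    show "incident_edges (\<beta> ` E) ends' (\<alpha> v) \<subseteq> \<beta> ` incident_edges E ends v"
    proof
      fix e' assume "e' \<in> incident_edges (\<beta> ` E) ends' (\<alpha> v)"
      then obtain e where e: "e \<in> E" "e' = \<beta> e" "\<alpha> v \<in> ends' (\<beta> e)" by (auto simp: incident_edges_def)
      then have "\<alpha> v \<in> \<alpha> ` ends e" using E1 by simp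
      then have "v \<in> ends e" using inj_on_image_mem_iff[OF a v S[OF e(1)]] by simp
      then show "e' \<in> \<beta> ` incident_edges E ends v" using e by (auto simp: incident_edges_def)
    qed
    show "\<beta> ` incident_edges E ends v \<subseteq> incident_edges (\<beta> ` E) ends' (\<alpha> v)"
    proof
      fix e' assume "e' \<in> \<beta> ` incident_edges E ends v"
      then obtain e where e: "e \<in> E" "e' = \<beta> e" "v \<in> ends e" by (auto simp: incident_edges_def)
      then show "e' \<in> incident_edges (\<beta> ` E) ends' (\<alpha> v)" using E1[OF e(1)] by (auto simp: incident_edges_def)
    qed
  qed
  have incsub: "incident_edges E ends v \<subseteq> E" for v by (auto simp: incident_edges_def)
  have binc: "bij_betw \<beta> (incident_edges E ends v) (\<beta> ` incident_edges E ends v)" for v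
    using inj_on_subset[OF b incsub] by (simp add: bij_betw_def)
  have simple': "simple_graph (\<alpha> ` V) (\<beta> ` E) ends'"
    unfolding simple_graph_def loopless_multigraph_def
  proof (intro conjI ballI)
    show "finite (\<alpha> ` V)" "finite (\<beta> ` E)" using ll by (auto simp: loopless_multigraph_def)
  next
    fix e' assume "e' \<in> \<beta> ` E"
    then obtain e where e: "e \<in> E" "e' = \<beta> e" by auto
    show "ends' e' \<subseteq> \<alpha> ` V" using E1[OF e(1)] S[OF e(1)] e(2) by auto
    have "inj_on \<alpha> (ends e)" using inj_on_subset[OF a S[OF e(1)]] .
    then have "card (\<alpha> ` ends e) = card (ends e)" by (rule card_image)
    also have "\<dots> = 2" using ll e(1) by (simp add: loopless_multigraph_def)
    finally show "card (ends' e') = 2" using E1[OF e(1)] e(2) by simp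
  next
    show "inj_on ends' (\<beta> ` E)"
    proof (rule inj_onI)
      fix e1' e2' assume "e1' \<in> \<beta> ` E" "e2' \<in> \<beta> ` E" and eq: "ends' e1' = ends' e2'"
      then obtain e1 e2 where e: "e1 \<in> E" "e1' = \<beta> e1" "e2 \<in> E" "e2' = \<beta> e2" by auto
      have "\<alpha> ` ends e1 = \<alpha> ` ends e2" using eq E1[OF e(1)] E1[OF e(3)] e(2,4) by simp
      then have "ends e1 = ends e2" using inj_on_image_eq_iff[OF a S[OF e(1)] S[OF e(3)]] by simp
      then have "e1 = e2" using simple e(1,3) unfolding simple_graph_def inj_on_def by blast
      then show "e1' = e2'" using e by simp
    qed
  qed
  have regular': "regular k (\<alpha> ` V) (\<beta> ` E) ends'"
    unfolding regular_def
  proof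
    fix v' assume "v' \<in> \<alpha> ` V"
    then obtain v where v: "v \<in> V" "v' = \<alpha> v" by auto
    have "card (\<beta> ` incident_edges E ends v) = card (incident_edges E ends v)"
      using binc[of v] by (simp add: bij_betw_same_card)
    also have "\<dots> = k" using G v(1) by (simp add: good_def regular_def)
    finally show "card (incident_edges (\<beta> ` E) ends' v') = k" using INC[OF v(1)] v(2) by simp
  qed
  have col': "edge_colorable k (\<alpha> ` V) (\<beta> ` E) ends'"
  proof -
    obtain c where c: "\<forall>e\<in>E. c e < k" "\<forall>v\<in>V. inj_on c (incident_edges E ends v)"
      using G by (auto simp: good_def edge_colorable_def)
    define c' where "c' = c \<circ> inv_into E \<beta>"
    show ?thesis unfolding edge_colorable_def
    proof (rule exI[of _ c'], intro conjI ballI)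
      fix e' assume "e' \<in> \<beta> ` E"
      then obtain e where e: "e \<in> E" "e' = \<beta> e" by auto
      then show "c' e' < k" using c(1) b by (simp add: c'_def)
    next
      fix v' assume "v' \<in> \<alpha> ` V"
      then obtain v where v: "v \<in> V" "v' = \<alpha> v" by auto
      show "inj_on c' (incident_edges (\<beta> ` E) ends' v')"
        unfolding INC[OF v(1)] v(2)
      proof (rule inj_onI)
        fix x y assume "x \<in> \<beta> ` incident_edges E ends v" "y \<in> \<beta> ` incident_edges E ends v" "c' x = c' y"
        then obtain ex ey where ex: "ex \<in> incident_edges E ends v" "x = \<beta> ex"
          and ey: "ey \<in> incident_edges E ends v" "y = \<beta> ey" and eq: "c' x = c' y" by auto
        have "ex \<in> E" "ey \<in> E" using ex ey incsub by auto
        then have "c ex = c ey" using eq ex(2) ey(2) b by (simp add: c'_def)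
        then have "ex = ey" using c(2) v(1) ex(1) ey(1) unfolding inj_on_def by blast
        then show "x = y" using ex ey by simp
      qed
    qed
  qed
  have adjmap: "(\<alpha> x, \<alpha> y) \<in> (adj_rel (\<beta> ` E) ends')\<^sup>*" if "(x, y) \<in> (adj_rel E ends)\<^sup>*" for x y
    using that
  proof (induction rule: rtrancl_induct)
    case (step y z)
    from step(2) obtain e where e: "e \<in> E" "ends e = {y, z}" by (auto simp: adj_rel_def)
    then have "ends' (\<beta> e) = {\<alpha> y, \<alpha> z}" using E1[OF e(1)] by simp
    then have "(\<alpha> y, \<alpha> z) \<in> adj_rel (\<beta> ` E) ends'" using e(1) unfolding adj_rel_def by blast
    with step(3) show ?case by (rule rtrancl_into_rtrancl)
  qed simp
  have conn': "connected_graph (\<alpha> ` V) (\<beta> ` E) ends'"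
    unfolding connected_graph_def
  proof (intro conjI ballI)
    show "\<alpha> ` V \<noteq> {}" using G by (simp add: good_def connected_graph_def)
    fix x' y' assume "x' \<in> \<alpha> ` V" "y' \<in> \<alpha> ` V"
    then obtain x y where xy: "x \<in> V" "y \<in> V" "x' = \<alpha> x" "y' = \<alpha> y" by auto
    then have "(x, y) \<in> (adj_rel E ends)\<^sup>*" using G by (simp add: good_def connected_graph_def)
    then show "(x', y') \<in> (adj_rel (\<beta> ` E) ends')\<^sup>*" using adjmap xy by simp
  qed
  have u: "u \<in> V" using G by (simp add: good_def)
  have cov': "\<exists>fV fE. covering_projection (\<alpha> ` V) (\<beta> ` E) ends' VH EH endsH fV fE \<and> fV (\<alpha> u) = x \<and>
           (\<forall>e\<in>incident_edges (\<beta> ` E) ends' (\<alpha> u). fE e = \<sigma>' e)"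
    if x: "x \<in> VH" and s': "bij_betw \<sigma>' (incident_edges (\<beta> ` E) ends' (\<alpha> u)) (incident_edges EH endsH x)" for x \<sigma>'
  proof -
    have s'': "bij_betw \<sigma>' (\<beta> ` incident_edges E ends u) (incident_edges EH endsH x)"
      using s' INC[OF u] by simp
    have "bij_betw (\<sigma>' \<circ> \<beta>) (incident_edges E ends u) (incident_edges EH endsH x)"
      by (rule bij_betw_trans[OF binc s''])
    then obtain fV fE where f: "covering_projection V E ends VH EH endsH fV fE" "fV u = x"
      "\<forall>e\<in>incident_edges E ends u. fE e = (\<sigma>' \<circ> \<beta>) e"
      using G x unfolding good_def by blast
    define fV' where "fV' = fV \<circ> inv_into V \<alpha>"
    define fE' where "fE' = fE \<circ> inv_into E \<beta>"
    have fVa: "fV' (\<alpha> v) = fV v" if "v \<in> V" for v using a that by (simp add: fV'_def)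
    have fEb: "fE' (\<beta> e) = fE e" if "e \<in> E" for e using b that by (simp add: fE'_def)
    have cp: "(\<forall>v\<in>V. fV v \<in> VH)" "(\<forall>e\<in>E. fE e \<in> EH)" "(\<forall>e\<in>E. endsH (fE e) = fV ` ends e)"
      "(\<forall>v\<in>V. bij_betw fE (incident_edges E ends v) (incident_edges EH endsH (fV v)))"
      using f(1) unfolding covering_projection_def by blast+
    show ?thesis
    proof (intro exI conjI)
      show "covering_projection (\<alpha> ` V) (\<beta> ` E) ends' VH EH endsH fV' fE'"
        unfolding covering_projection_def
      proof (intro conjI ballI)
        fix v' assume "v' \<in> \<alpha> ` V"
        then obtain v where v: "v \<in> V" "v' = \<alpha> v" by auto
        show "fV' v' \<in> VH" using cp(1) v fVa by simp
        have "bij_betw (fE' \<circ> \<beta>) (incident_edges E ends v) (incident_edges EH endsH (fV v))"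
        proof -
          have "bij_betw (fE' \<circ> \<beta>) (incident_edges E ends v) (incident_edges EH endsH (fV v)) =
                bij_betw fE (incident_edges E ends v) (incident_edges EH endsH (fV v))"
            by (rule bij_betw_cong) (use fEb incsub in auto)
          then show ?thesis using cp(4) v(1) by simp
        qed
        then have "bij_betw fE' (\<beta> ` incident_edges E ends v) (incident_edges EH endsH (fV v))"
          by (simp only: bij_betw_comp_iff[OF binc])
        then show "bij_betw fE' (incident_edges (\<beta> ` E) ends' v') (incident_edges EH endsH (fV' v'))"
          using INC[OF v(1)] v(2) fVa[OF v(1)] by simp
      next
        fix e' assume "e' \<in> \<beta> ` E"
        then obtain e where e: "e \<in> E" "e' = \<beta> e" by auto
        show "fE' e' \<in> EH" using cp(2) e fEb by simp
        have "fV' ` ends' e' = fV' ` \<alpha> ` ends e" using E1[OF e(1)] e(2) by simp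
        also have "\<dots> = fV ` ends e"
          unfolding image_image by (rule image_cong) (use fVa S[OF e(1)] in auto)
        also have "\<dots> = endsH (fE e)" using cp(3) e(1) by simp
        finally show "endsH (fE' e') = fV' ` ends' e'" using fEb[OF e(1)] e(2) by simp
      qed
      show "fV' (\<alpha> u) = x" using fVa[OF u] f(2) by simp
      show "\<forall>e'\<in>incident_edges (\<beta> ` E) ends' (\<alpha> u). fE' e' = \<sigma>' e'"
      proof
        fix e' assume "e' \<in> incident_edges (\<beta> ` E) ends' (\<alpha> u)"
        then obtain e where e: "e \<in> incident_edges E ends u" "e' = \<beta> e" using INC[OF u] by auto
        have "e \<in> E" using e(1) incsub by blast
        then have "fE' e' = fE e" using fEb e(2) by simp
        also have "\<dots> = \<sigma>' e'" using f(3) e by simp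
        finally show "fE' e' = \<sigma>' e'" .
      qed
    qed
  qed
  show ?thesis unfolding good_def ends'_def[symmetric]
    using simple' conn' regular' col' u cov' by blast
qed



theorem mainTheorem5:
  fixes k :: nat and VH :: "'v set" and EH :: "'e set" and endsH :: "'e \<Rightarrow> 'v set"
  assumes "k \<ge> 1"
    and "loopless_multigraph VH EH endsH"
    and "connected_graph VH EH endsH"
    and "regular k VH EH endsH"
    and "edge_colorable k VH EH endsH"
  shows "\<exists>(VG :: nat set) (EG :: nat set) (endsG :: nat \<Rightarrow> nat set) u.
           simple_graph VG EG endsG \<and> connected_graph VG EG endsG \<and>
           regular k VG EG endsG \<and> edge_colorable k VG EG endsG \<and> u \<in> VG \<and>
           (\<forall>x\<in>VH. \<forall>\<sigma>. bij_betw \<sigma> (incident_edges EG endsG u) (incident_edges EH endsH x) \<longrightarrow>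
              (\<exists>fV fE. covering_projection VG EG endsG VH EH endsH fV fE \<and> fV u = x \<and>
                 (\<forall>e\<in>incident_edges EG endsG u. fE e = \<sigma> e)))"
proof -
  from assms(5) obtain c where c: "\<forall>e\<in>EH. c e < k" "\<forall>v\<in>VH. inj_on c (incident_edges EH endsH v)"
    unfolding edge_colorable_def by blast
  interpret H: Hg k VH EH endsH c
  proof
    show "loopless_multigraph VH EH endsH" by (rule assms(2))
    show "regular k VH EH endsH" by (rule assms(4))
  qed (use c in auto)
  have g: "good k VH EH endsH H.R H.EG snd H.u0"
    unfolding good_def
  proof (intro conjI)
    show "simple_graph H.R H.EG snd" by (rule H.G_simple)
    show "connected_graph H.R H.EG snd" by (rule H.G_conn)
    show "regular k H.R H.EG snd" by (rule H.G_regular)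
    show "edge_colorable k H.R H.EG snd" by (rule H.G_col)
    show "H.u0 \<in> H.R" by (rule H.u0_R)
    show "\<forall>x\<in>VH. \<forall>\<sigma>. bij_betw \<sigma> (incident_edges H.EG snd H.u0) (incident_edges EH endsH x) \<longrightarrow>
        (\<exists>fV fE. covering_projection H.R H.EG snd VH EH endsH fV fE \<and> fV H.u0 = x \<and>
           (\<forall>e\<in>incident_edges H.EG snd H.u0. fE e = \<sigma> e))"
      using H.main_loc by blast
  qed
  have fE: "finite H.EG" using H.G_simple by (simp add: simple_graph_def loopless_multigraph_def)
  obtain \<alpha> :: "_ \<Rightarrow> nat" and n where \<alpha>: "\<alpha> ` H.R = {i. i < n}" "inj_on \<alpha> H.R"
    using finite_imp_inj_to_nat_seg[OF H.fin_R] by blast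
  obtain \<beta> :: "_ \<Rightarrow> nat" and m where \<beta>: "\<beta> ` H.EG = {i. i < m}" "inj_on \<beta> H.EG"
    using finite_imp_inj_to_nat_seg[OF fE] by blast
  have "good k VH EH endsH (\<alpha> ` H.R) (\<beta> ` H.EG) (\<lambda>e'. \<alpha> ` snd (inv_into H.EG \<beta> e')) (\<alpha> H.u0)"
    by (rule transfer[OF g \<alpha>(2) \<beta>(2)])
  then show ?thesis unfolding good_def by blast
qed

end
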